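(* Let $n\ge1$ and let $\Phi:\mathbb{R}^{n+1}\to[0,+\infty)$ be a norm, and set $\psi(\widehat\xi):=\Phi(\widehat\xi,0)$ for $\widehat\xi\in\mathbb{R}^n$. Then $\Phi$ is partially monotone if and only if there exists a positively one-homogeneous convex function $\omega:[0,+\infty)\times[0,+\infty)\to[0,+\infty)$ with $\omega(1,0)>0$, $\omega(0,1)>0$ and $\omega(s_1,s_2)\le\omega(t_1,t_2)$ whenever $0\le s_i\le t_i$, $i=1,2$, such that $\Phi(\widehat\xi,\xi_{n+1})=\omega(\psi(\widehat\xi),|\xi_{n+1}|)$ for all $(\widehat\xi,\xi_{n+1})\in\mathbb{R}^{n+1}$.
   Context: A norm on $\mathbb{R}^m$ is a convex function $\Psi:\mathbb{R}^m\to[0,+\infty)$ with $\Psi(\lambda\xi)=|\lambda|\Psi(\xi)$ and $\Psi(\xi)\ge c|\xi|$ for some $c>0$. The norm $\Phi$ on $\mathbb{R}^{n+1}$ is partially monotone if for all $(\widehat\xi,\xi_{n+1}),(\widehat\eta,\eta_{n+1})\in\mathbb{R}^{n+1}$: $\Phi(\widehat\xi,0)\le\Phi(\widehat\eta,0)$ and $\Phi(0,\xi_{n+1})\le\Phi(0,\eta_{n+1})$ imply $\Phi(\widehat\xi,\xi_{n+1})\le\Phi(\widehat\eta,\eta_{n+1})$. *)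

theory Defs
  imports "HOL-Analysis.Analysis"
begin

definition is_norm_fun :: "('a::real_normed_vector \<Rightarrow> real) \<Rightarrow> bool" where
  "is_norm_fun \<Psi> \<longleftrightarrow> convex_on UNIV \<Psi> \<and> (\<forall>\<xi>. \<Psi> \<xi> \<ge> 0)
     \<and> (\<forall>(l::real) \<xi>. \<Psi> (l *\<^sub>R \<xi>) = \<bar>l\<bar> * \<Psi> \<xi>)
     \<and> (\<exists>c>0. \<forall>\<xi>. \<Psi> \<xi> \<ge> c * norm \<xi>)"

text \<open>R^{n+1} is represented as (real^'n) \<times> real.\<close>
definition partially_monotone :: "(((real^'n) \<times> real) \<Rightarrow> real) \<Rightarrow> bool" where
  "partially_monotone \<Phi> \<longleftrightarrow>
     (\<forall>\<xi>h \<xi>l \<eta>h \<eta>l. \<Phi> (\<xi>h, 0) \<le> \<Phi> (\<eta>h, 0) \<and> \<Phi> (0, \<xi>l) \<le> \<Phi> (0, \<eta>l)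
        \<longrightarrow> \<Phi> (\<xi>h, \<xi>l) \<le> \<Phi> (\<eta>h, \<eta>l))"

end

theory Submission
  imports Defs
begin

theorem propositionA5:
  fixes \<Phi> :: "(real^'n) \<times> real \<Rightarrow> real"
  assumes "is_norm_fun \<Phi>"
  shows "partially_monotone \<Phi> \<longleftrightarrow>
    (\<exists>\<omega> :: real \<Rightarrow> real \<Rightarrow> real.
       (\<forall>s t. s \<ge> 0 \<and> t \<ge> 0 \<longrightarrow> \<omega> s t \<ge> 0)
     \<and> (\<forall>l s t. l > 0 \<and> s \<ge> 0 \<and> t \<ge> 0 \<longrightarrow> \<omega> (l * s) (l * t) = l * \<omega> s t)
     \<and> convex_on {p :: real \<times> real. fst p \<ge> 0 \<and> snd p \<ge> 0} (\<lambda>p. \<omega> (fst p) (snd p))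
     \<and> \<omega> 1 0 > 0 \<and> \<omega> 0 1 > 0
     \<and> (\<forall>s1 s2 t1 t2. 0 \<le> s1 \<and> s1 \<le> t1 \<and> 0 \<le> s2 \<and> s2 \<le> t2 \<longrightarrow> \<omega> s1 s2 \<le> \<omega> t1 t2)
     \<and> (\<forall>\<xi>h \<xi>l. \<Phi> (\<xi>h, \<xi>l) = \<omega> (\<Phi> (\<xi>h, 0)) \<bar>\<xi>l\<bar>))"
proof -
  have cvx: "convex_on UNIV \<Phi>" and nn: "\<And>x. \<Phi> x \<ge> 0"
    and hom: "\<And>l x. \<Phi> (l *\<^sub>R x) = \<bar>l\<bar> * \<Phi> x"
    using assms unfolding is_norm_fun_def by auto
  have cvxD: "\<And>x y a b. 0\<le>a \<Longrightarrow> 0\<le>b \<Longrightarrow> a+b=1 \<Longrightarrow> \<Phi> (a *\<^sub>R x + b *\<^sub>R y) \<le> a * \<Phi> x + b * \<Phi> y"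
    using cvx unfolding convex_on_def by blast
  obtain c where c: "c > 0" "\<And>x. \<Phi> x \<ge> c * norm x"
    using assms unfolding is_norm_fun_def by auto
  have hom2: "\<Phi> (l *\<^sub>R a, l * b) = \<bar>l\<bar> * \<Phi> (a, b)" for l a b
    using hom[of l "(a,b)"] by simp
  have P00: "\<Phi> (0, 0) = 0" using hom2[of 0 0 0] by simp
  have P01: "\<Phi> (0, 1) > 0"
  proof -
    have "c * norm ((0::real^'n), (1::real)) \<le> \<Phi> (0,1)" by (rule c(2))
    moreover have "norm ((0::real^'n), (1::real)) \<ge> 1" using norm_snd_le[of "1::real" "0::real^'n"] by simp
    ultimately show ?thesis using c(1) mult_left_mono[of 1 "norm ((0::real^'n), (1::real))" c] by linarith
  qed
  have P0l: "\<Phi> (0, t) = \<bar>t\<bar> * \<Phi> (0, 1)" for t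
    using hom2[of t 0 1] by simp
  show ?thesis (is "?L \<longleftrightarrow> ?R")
  proof
    assume pm: "partially_monotone \<Phi>"
    define v :: "real^'n" where "v = axis undefined 1"
    have v0: "v \<noteq> 0" unfolding v_def by simp
    have Pv: "\<Phi> (v, 0) > 0"
    proof -
      have "c * norm (v, 0::real) \<le> \<Phi> (v,0)" by (rule c(2))
      moreover have "norm (v, 0::real) \<ge> norm v" by (rule norm_fst_le)
      moreover have "norm v > 0" using v0 by simp
      ultimately show ?thesis using c(1) mult_left_mono[of "norm v" "norm (v, 0::real)" c] mult_pos_pos[of c "norm v"] by linarith
    qed
    define u where "u = (1 / \<Phi> (v, 0)) *\<^sub>R v"
    have Pu: "\<Phi> (u, 0) = 1" unfolding u_def using hom2[of "1 / \<Phi> (v, 0)" v 0] Pv by simp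
    have Psu: "\<Phi> (s *\<^sub>R u, 0) = \<bar>s\<bar>" for s using hom2[of s u 0] Pu by simp
    have mono: "\<Phi> (a, b) \<le> \<Phi> (a', b')" if "\<Phi> (a, 0) \<le> \<Phi> (a', 0)" "\<Phi> (0, b) \<le> \<Phi> (0, b')" for a b a' b'
      using pm that unfolding partially_monotone_def by blast
    define \<omega> where "\<omega> s t = \<Phi> (s *\<^sub>R u, t)" for s t
    show ?R
    proof (rule exI[of _ \<omega>], intro conjI allI impI)
      show "\<omega> s t \<ge> 0" for s t unfolding \<omega>_def by (rule nn)
    next
      fix l s t :: real assume "0 < l \<and> 0 \<le> s \<and> 0 \<le> t"
      then show "\<omega> (l * s) (l * t) = l * \<omega> s t"
        unfolding \<omega>_def using hom2[of l "s *\<^sub>R u" t] by simp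
    next
      show "convex_on {p :: real \<times> real. fst p \<ge> 0 \<and> snd p \<ge> 0} (\<lambda>p. \<omega> (fst p) (snd p))"
        unfolding convex_on_def
      proof (intro conjI ballI allI impI)
        show "convex {p :: real \<times> real. fst p \<ge> 0 \<and> snd p \<ge> 0}"
          unfolding convex_def by auto
      next
        fix x y :: "real \<times> real" and a b :: real
        assume "0 \<le> a" "0 \<le> b" "a + b = 1"
        have "\<Phi> (a *\<^sub>R (fst x *\<^sub>R u, snd x) + b *\<^sub>R (fst y *\<^sub>R u, snd y))
              \<le> a * \<Phi> (fst x *\<^sub>R u, snd x) + b * \<Phi> (fst y *\<^sub>R u, snd y)"
          by (rule cvxD) (use \<open>0 \<le> a\<close> \<open>0 \<le> b\<close> \<open>a + b = 1\<close> in auto)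
        moreover have "a *\<^sub>R (fst x *\<^sub>R u, snd x) + b *\<^sub>R (fst y *\<^sub>R u, snd y)
            = (fst (a *\<^sub>R x + b *\<^sub>R y) *\<^sub>R u, snd (a *\<^sub>R x + b *\<^sub>R y))"
          by (simp add: scaleR_add_left)
        ultimately show "\<omega> (fst (a *\<^sub>R x + b *\<^sub>R y)) (snd (a *\<^sub>R x + b *\<^sub>R y))
              \<le> a * \<omega> (fst x) (snd x) + b * \<omega> (fst y) (snd y)"
          unfolding \<omega>_def by simp
      qed
    next
      show "\<omega> 1 0 > 0" unfolding \<omega>_def using Pu by simp
    next
      show "\<omega> 0 1 > 0" unfolding \<omega>_def using P01 by simp
    next
      fix s1 s2 t1 t2 :: real assume h: "0 \<le> s1 \<and> s1 \<le> t1 \<and> 0 \<le> s2 \<and> s2 \<le> t2"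
      show "\<omega> s1 s2 \<le> \<omega> t1 t2" unfolding \<omega>_def
      proof (rule mono)
        show "\<Phi> (s1 *\<^sub>R u, 0) \<le> \<Phi> (t1 *\<^sub>R u, 0)" using h Psu by simp
        show "\<Phi> (0, s2) \<le> \<Phi> (0, t2)"
          unfolding P0l[of s2] P0l[of t2] using h P01 mult_right_mono[of s2 t2 "\<Phi> (0,1)"] by simp
      qed
    next
      fix a :: "real^'n" and b :: real
      have e1: "\<Phi> (\<Phi> (a, 0) *\<^sub>R u, 0) = \<Phi> (a, 0)" using Psu nn by simp
      have e2: "\<Phi> (0, \<bar>b\<bar>) = \<Phi> (0, b)" unfolding P0l[of b] P0l[of "\<bar>b\<bar>"] by simp
      show "\<Phi> (a, b) = \<omega> (\<Phi> (a, 0)) \<bar>b\<bar>" unfolding \<omega>_def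
        using mono[of a "\<Phi> (a, 0) *\<^sub>R u" b "\<bar>b\<bar>"] mono[of "\<Phi> (a, 0) *\<^sub>R u" a "\<bar>b\<bar>" b] e1 e2
        by simp
    qed
  next
    assume "\<exists>\<omega>. (\<forall>s t. s \<ge> 0 \<and> t \<ge> 0 \<longrightarrow> \<omega> s t \<ge> 0)
     \<and> (\<forall>l s t. l > 0 \<and> s \<ge> 0 \<and> t \<ge> 0 \<longrightarrow> \<omega> (l * s) (l * t) = l * \<omega> s t)
     \<and> convex_on {p :: real \<times> real. fst p \<ge> 0 \<and> snd p \<ge> 0} (\<lambda>p. \<omega> (fst p) (snd p))
     \<and> \<omega> 1 0 > 0 \<and> \<omega> 0 1 > 0
     \<and> (\<forall>s1 s2 t1 t2. 0 \<le> s1 \<and> s1 \<le> t1 \<and> 0 \<le> s2 \<and> s2 \<le> t2 \<longrightarrow> \<omega> s1 s2 \<le> \<omega> t1 t2)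
     \<and> (\<forall>\<xi>h \<xi>l. \<Phi> (\<xi>h, \<xi>l) = \<omega> (\<Phi> (\<xi>h, 0)) \<bar>\<xi>l\<bar>)"
    then obtain \<omega> :: "real \<Rightarrow> real \<Rightarrow> real" where H: "(\<forall>s t. s \<ge> 0 \<and> t \<ge> 0 \<longrightarrow> \<omega> s t \<ge> 0)
     \<and> (\<forall>l s t. l > 0 \<and> s \<ge> 0 \<and> t \<ge> 0 \<longrightarrow> \<omega> (l * s) (l * t) = l * \<omega> s t)
     \<and> convex_on {p :: real \<times> real. fst p \<ge> 0 \<and> snd p \<ge> 0} (\<lambda>p. \<omega> (fst p) (snd p))
     \<and> \<omega> 1 0 > 0 \<and> \<omega> 0 1 > 0
     \<and> (\<forall>s1 s2 t1 t2. 0 \<le> s1 \<and> s1 \<le> t1 \<and> 0 \<le> s2 \<and> s2 \<le> t2 \<longrightarrow> \<omega> s1 s2 \<le> \<omega> t1 t2)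
     \<and> (\<forall>\<xi>h \<xi>l. \<Phi> (\<xi>h, \<xi>l) = \<omega> (\<Phi> (\<xi>h, 0)) \<bar>\<xi>l\<bar>)"
      by (rule exE)
    have mo: "\<And>s1 s2 t1 t2. 0 \<le> s1 \<and> s1 \<le> t1 \<and> 0 \<le> s2 \<and> s2 \<le> t2 \<Longrightarrow> \<omega> s1 s2 \<le> \<omega> t1 t2"
      using H[THEN conjunct2, THEN conjunct2, THEN conjunct2, THEN conjunct2, THEN conjunct2, THEN conjunct1] by blast
    have rep: "\<And>a b. \<Phi> (a, b) = \<omega> (\<Phi> (a, 0)) \<bar>b\<bar>"
      using H[THEN conjunct2, THEN conjunct2, THEN conjunct2, THEN conjunct2, THEN conjunct2, THEN conjunct2] by (rule spec2)
    show "partially_monotone \<Phi>" unfolding partially_monotone_def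
    proof (intro allI impI)
      fix a b a' b' assume h: "\<Phi> (a, 0) \<le> \<Phi> (a', 0) \<and> \<Phi> (0, b) \<le> \<Phi> (0, b')"
      then have "\<bar>b\<bar> * \<Phi> (0,1) \<le> \<bar>b'\<bar> * \<Phi> (0,1)" unfolding P0l[of b] P0l[of b'] by simp
      then have "\<bar>b\<bar> \<le> \<bar>b'\<bar>" using P01 by simp
      then have "\<omega> (\<Phi> (a, 0)) \<bar>b\<bar> \<le> \<omega> (\<Phi> (a', 0)) \<bar>b'\<bar>"
        using mo[of "\<Phi> (a, 0)" "\<Phi> (a', 0)" "\<bar>b\<bar>" "\<bar>b'\<bar>"] h nn[of "(a,0)"] by linarith
      then show "\<Phi> (a, b) \<le> \<Phi> (a', b')" by (simp only: rep[of a b] rep[of a' b'])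
    qed
  qed
qed

end
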